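(* Let $\mathbb K$ be a field with $2\in\mathbb K^\times$, $A$ a unital commutative associative $\mathbb K$-algebra, $\mathfrak k$ a $\mathbb K$-Lie algebra, $\mathfrak g=A\otimes\mathfrak k$ and $\mathfrak z$ a vector space. A $\mathfrak z$-valued 2-cocycle $f=f_1\circ p_1+f_2\circ p_2+f_3\circ p_3$ on $\mathfrak g$ is a coboundary if and only if $f_1=0$, $f_3=0$, and there exists a linear map $\ell:A\to\mathrm{Lin}(\mathfrak k,\mathfrak z)$ with $\tilde f_2(a)=d_{\mathfrak k}(\ell(a))$ for all $a\in A$.
   Context: $\mathfrak g$ has bracket $[a\otimes x,a'\otimes x']=aa'\otimes[x,x']$, $ax=a\otimes x$, unit $\mathbf 1$. $v\wedge w=\tfrac12(v\otimes w-w\otimes v)$, $v\vee w=\tfrac12(v\otimes w+w\otimes v)$. $I_A$ is the kernel of multiplication $S^2(A)\to A$. $p_1(ax\wedge by)=a\wedge b\otimes x\vee y$, $p_2(ax\wedge by)=ab\otimes x\wedge y$, $p_3(ax\wedge by)=(a\vee b-ab\vee\mathbf 1)\otimes x\wedge y$ give an isomorphism $\Lambda^2(\mathfrak g)\cong(\Lambda^2(A)\otimes S^2(\mathfrak k))\oplus(A\otimes\Lambda^2(\mathfrak k))\oplus(I_A\otimes\Lambda^2(\mathfrak k))$. A 2-cocycle is a linear map $\Lambda^2(\mathfrak g)\to\mathfrak z$ vanishing on the span of $[u,v]\wedge w+[v,w]\wedge u+[w,u]\wedge v$; it is a coboundary if it equals $u\wedge v\mapsto-\ell'([u,v])$ for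 some linear $\ell':\mathfrak g\to\mathfrak z$. $\tilde f_2(a)(x,y)=f_2(a\otimes x\wedge y)$. For linear $\lambda:\mathfrak k\to\mathfrak z$, $(d_{\mathfrak k}\lambda)(x,y)=-\lambda([x,y])$. *)

theory Defs
  imports Main "HOL.Vector_Spaces"
begin

definition bilin_map ::
  "('k::field \<Rightarrow> 'a::ab_group_add \<Rightarrow> 'a) \<Rightarrow> ('k \<Rightarrow> 'b::ab_group_add \<Rightarrow> 'b)
   \<Rightarrow> ('k \<Rightarrow> 'c::ab_group_add \<Rightarrow> 'c) \<Rightarrow> ('a \<Rightarrow> 'b \<Rightarrow> 'c) \<Rightarrow> bool" where
  "bilin_map s1 s2 s f \<longleftrightarrow>
     (\<forall>y. Vector_Spaces.linear s1 s (\<lambda>x. f x y)) \<and>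
     (\<forall>x. Vector_Spaces.linear s2 s (\<lambda>y. f x y))"

definition trilin_map ::
  "('k::field \<Rightarrow> 'a::ab_group_add \<Rightarrow> 'a) \<Rightarrow> ('k \<Rightarrow> 'b::ab_group_add \<Rightarrow> 'b)
   \<Rightarrow> ('k \<Rightarrow> 'c::ab_group_add \<Rightarrow> 'c) \<Rightarrow> ('k \<Rightarrow> 'd::ab_group_add \<Rightarrow> 'd)
   \<Rightarrow> ('a \<Rightarrow> 'b \<Rightarrow> 'c \<Rightarrow> 'd) \<Rightarrow> bool" where
  "trilin_map s1 s2 s3 s f \<longleftrightarrow>
     (\<forall>y z. Vector_Spaces.linear s1 s (\<lambda>x. f x y z)) \<and>
     (\<forall>x z. Vector_Spaces.linear s2 s (\<lambda>y. f x y z)) \<and>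
     (\<forall>x y. Vector_Spaces.linear s3 s (\<lambda>z. f x y z))"

definition quadrilin_map ::
  "('k::field \<Rightarrow> 'a::ab_group_add \<Rightarrow> 'a) \<Rightarrow> ('k \<Rightarrow> 'b::ab_group_add \<Rightarrow> 'b)
   \<Rightarrow> ('k \<Rightarrow> 'c::ab_group_add \<Rightarrow> 'c) \<Rightarrow> ('k \<Rightarrow> 'd::ab_group_add \<Rightarrow> 'd)
   \<Rightarrow> ('k \<Rightarrow> 'e::ab_group_add \<Rightarrow> 'e)
   \<Rightarrow> ('a \<Rightarrow> 'b \<Rightarrow> 'c \<Rightarrow> 'd \<Rightarrow> 'e) \<Rightarrow> bool" where
  "quadrilin_map s1 s2 s3 s4 s f \<longleftrightarrow>
     (\<forall>y z w. Vector_Spaces.linear s1 s (\<lambda>x. f x y z w)) \<and>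
     (\<forall>x z w. Vector_Spaces.linear s2 s (\<lambda>y. f x y z w)) \<and>
     (\<forall>x y w. Vector_Spaces.linear s3 s (\<lambda>z. f x y z w)) \<and>
     (\<forall>x y z. Vector_Spaces.linear s4 s (\<lambda>w. f x y z w))"

text \<open>A unital commutative associative K-algebra: the ring structure comes from the
type class (1 is not required to differ from 0), the K-vector space structure
from sA, and scalars commute with multiplication.\<close>

definition comm_unital_algebra ::
  "('k::field \<Rightarrow> 'a::{comm_ring,comm_monoid_mult} \<Rightarrow> 'a) \<Rightarrow> bool" where
  "comm_unital_algebra sA \<longleftrightarrow>
     vector_space sA \<and> (\<forall>c a b. sA c (a * b) = sA c a * b)"

definition lie_algebra ::
  "('k::field \<Rightarrow> 'l::ab_group_add \<Rightarrow> 'l) \<Rightarrow> ('l \<Rightarrow> 'l \<Rightarrow> 'l) \<Rightarrow> bool" where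
  "lie_algebra sL br \<longleftrightarrow>
     vector_space sL \<and> bilin_map sL sL sL br \<and> (\<forall>x. br x x = 0) \<and>
     (\<forall>x y z. br x (br y z) + br y (br z x) + br z (br x y) = 0)"

text \<open>Encoding of g = A \<otimes> k via the universal property of the tensor product:
a linear map \<Lambda>^2(g) \<rightarrow> z, u\<wedge>v \<mapsto> f(u\<wedge>v), is encoded by the 4-linear map
F a x b y = f(ax \<wedge> by) on A \<times> k \<times> A \<times> k, which is antisymmetric under
(a,x) \<leftrightarrow> (b,y).  A linear map g \<rightarrow> z is encoded by a bilinear map L a x = l'(ax).\<close>

definition g_2form where
  "g_2form sA sL sZ F \<longleftrightarrow>
     quadrilin_map sA sL sA sL sZ F \<and> (\<forall>a x b y. F a x b y = - F b y a x)"

text \<open>2-cocycle: vanishing on [u,v]\<wedge>w + [v,w]\<wedge>u + [w,u]\<wedge>v; by multilinearity it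
suffices (and is necessary) to test pure tensors u = ax, v = by, w = cz, using
[ax,by] = ab \<otimes> [x,y].\<close>

definition g_2cocycle where
  "g_2cocycle sA sL sZ br F \<longleftrightarrow>
     g_2form sA sL sZ F \<and>
     (\<forall>a b c x y z. F (a * b) (br x y) c z + F (b * c) (br y z) a x
                      + F (c * a) (br z x) b y = 0)"

definition g_2coboundary where
  "g_2coboundary sA sL sZ br F \<longleftrightarrow>
     (\<exists>L. bilin_map sA sL sZ L \<and> (\<forall>a x b y. F a x b y = - L (a * b) (br x y)))"

end

theory Submission
  imports Defs
begin

lemma additive_zero:
  fixes f :: "'a::ab_group_add \<Rightarrow> 'b::ab_group_add"
  assumes "\<forall>x y. f (x + y) = f x + f y"
  shows "f 0 = 0"
proof -
  have "f (0 + 0) = f 0 + f 0" using assms by blast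
  then show ?thesis by simp
qed

lemma additive_sum_list:
  fixes f :: "'a::ab_group_add \<Rightarrow> 'b::ab_group_add"
  assumes "\<forall>x y. f (x + y) = f x + f y"
  shows "f (\<Sum>(a, b)\<leftarrow>ps. g a b) = (\<Sum>(a, b)\<leftarrow>ps. f (g a b))"
proof (induction ps)
  case Nil
  then show ?case using additive_zero[OF assms] by simp
next
  case (Cons p ps)
  then show ?case using assms by (cases p) simp
qed

theorem proposition3p6:
  fixes sA :: "'k::field \<Rightarrow> 'a::{comm_ring,comm_monoid_mult} \<Rightarrow> 'a"
    and sL :: "'k \<Rightarrow> 'l::ab_group_add \<Rightarrow> 'l"
    and br :: "'l \<Rightarrow> 'l \<Rightarrow> 'l"
    and sZ :: "'k \<Rightarrow> 'z::ab_group_add \<Rightarrow> 'z"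
    and F :: "'a \<Rightarrow> 'l \<Rightarrow> 'a \<Rightarrow> 'l \<Rightarrow> 'z"
    and F1 :: "'a \<Rightarrow> 'a \<Rightarrow> 'l \<Rightarrow> 'l \<Rightarrow> 'z"
    and F2 :: "'a \<Rightarrow> 'l \<Rightarrow> 'l \<Rightarrow> 'z"
    and F3 :: "'a \<Rightarrow> 'a \<Rightarrow> 'l \<Rightarrow> 'l \<Rightarrow> 'z"
  assumes two: "(2::'k) \<noteq> 0"
    and A: "comm_unital_algebra sA"
    and k: "lie_algebra sL br"
    and z: "vector_space sZ"
    and cocycle: "g_2cocycle sA sL sZ br F"
    \<comment> \<open>f1 : \<Lambda>^2(A) \<otimes> S^2(k) \<rightarrow> z, encoded by f1(a\<wedge>b \<otimes> x\<or>y) = F1 a b x y\<close>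
    and f1: "quadrilin_map sA sA sL sL sZ F1"
      "\<forall>a b x y. F1 b a x y = - F1 a b x y"
      "\<forall>a b x y. F1 a b y x = F1 a b x y"
    \<comment> \<open>f2 : A \<otimes> \<Lambda>^2(k) \<rightarrow> z, encoded by f2(a \<otimes> x\<wedge>y) = F2 a x y\<close>
    and f2: "trilin_map sA sL sL sZ F2"
      "\<forall>a x y. F2 a y x = - F2 a x y"
    \<comment> \<open>f3 : I_A \<otimes> \<Lambda>^2(k) \<rightarrow> z, given as the restriction of a linear map on
        S^2(A) \<otimes> \<Lambda>^2(k) encoded by (a\<or>b \<otimes> x\<wedge>y) \<mapsto> F3 a b x y\<close>
    and f3: "quadrilin_map sA sA sL sL sZ F3"
      "\<forall>a b x y. F3 b a x y = F3 a b x y"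
      "\<forall>a b x y. F3 a b y x = - F3 a b x y"
    \<comment> \<open>f = f1 \<circ> p1 + f2 \<circ> p2 + f3 \<circ> p3, evaluated on ax \<wedge> by\<close>
    and decomp: "\<forall>a x b y. F a x b y =
                   F1 a b x y + F2 (a * b) x y + (F3 a b x y - F3 (a * b) 1 x y)"
  shows "g_2coboundary sA sL sZ br F \<longleftrightarrow>
           (\<forall>a b x y. F1 a b x y = 0) \<and>
           (\<forall>(ps :: ('a \<times> 'a) list) x y.
              (\<Sum>(a, b)\<leftarrow>ps. a * b) = 0 \<longrightarrow> (\<Sum>(a, b)\<leftarrow>ps. F3 a b x y) = 0) \<and>
           (\<exists>l :: 'a \<Rightarrow> 'l \<Rightarrow> 'z. bilin_map sA sL sZ l \<and>
              (\<forall>a x y. F2 a x y = - l a (br x y)))"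
proof
  assume cb: "g_2coboundary sA sL sZ br F"
  then obtain L where Lb: "bilin_map sA sL sZ L"
    and LF: "\<forall>a x b y. F a x b y = - L (a * b) (br x y)"
    unfolding g_2coboundary_def by blast
  have brlin: "\<And>x. Vector_Spaces.linear sL sL (\<lambda>y. br x y)"
    and brlin1: "\<And>y. Vector_Spaces.linear sL sL (\<lambda>x. br x y)"
    using k unfolding lie_algebra_def bilin_map_def by auto
  have Llin: "\<And>a. Vector_Spaces.linear sL sZ (\<lambda>y. L a y)"
    using Lb unfolding bilin_map_def by auto
  have brsym: "br x y + br y x = 0" for x y
  proof -
    have "br (x + y) (x + y) = 0" using k unfolding lie_algebra_def by blast
    moreover have "br (x + y) (x + y) = br x x + br x y + (br y x + br y y)"
      using brlin[of "x+y"] brlin1[of x] brlin1[of y] unfolding linear_iff by (simp add: add.assoc)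
    moreover have "br x x = 0" "br y y = 0" using k unfolding lie_algebra_def by blast+
    ultimately show ?thesis by (simp add: add.assoc)
  qed
  have F2anti: "F2 a y x = - F2 a x y" "F3 a b y x = - F3 a b x y" for a b x y
    using f2(2) f3(3) by blast+
  have F1z: "F1 a b x y = 0" for a b x y
  proof -
    have "F a x b y + F a y b x = - L (a * b) (br x y + br y x)"
      using LF Llin[of "a*b"] unfolding linear_iff by (simp add: algebra_simps)
    also have "\<dots> = 0" using brsym additive_zero[of "L (a*b)"] Llin[of "a*b"]
      unfolding linear_iff by simp
    finally have "F a x b y + F a y b x = 0" .
    moreover have "F a x b y + F a y b x = F1 a b x y + F1 a b x y"
    proof -
      have d1: "F a x b y = F1 a b x y + F2 (a * b) x y + (F3 a b x y - F3 (a * b) 1 x y)"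
        using decomp by blast
      have d2: "F a y b x = F1 a b y x + F2 (a * b) y x + (F3 a b y x - F3 (a * b) 1 y x)"
        using decomp by blast
      have s1: "F1 a b y x = F1 a b x y" using f1(3) by blast
      have s2: "F2 (a * b) y x = - F2 (a * b) x y" using F2anti(1) by blast
      have s3: "F3 a b y x = - F3 a b x y" using F2anti(2) by blast
      have s4: "F3 (a * b) 1 y x = - F3 (a * b) 1 x y" using F2anti(2) by blast
      show ?thesis unfolding d1 d2 s1 s2 s3 s4 by (simp add: algebra_simps)
    qed
    ultimately have e: "F1 a b x y + F1 a b x y = 0" by simp
    have vz: "vector_space sZ" by (rule z)
    have "sZ 2 (F1 a b x y) = sZ 1 (F1 a b x y) + sZ 1 (F1 a b x y)"
      using vector_space.vector_space_assms(2)[OF vz, of 1 1 "F1 a b x y"] by (simp only: one_add_one)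
    then have "sZ 2 (F1 a b x y) = 0" using e vector_space.vector_space_assms(4)[OF vz] by simp
    then show ?thesis using vector_space.scale_eq_0_iff[OF vz] two by blast
  qed
  have F2l: "F2 a x y = - L a (br x y)" for a x y
  proof -
    have "F a x 1 y = F2 a x y" using decomp F1z by simp
    moreover have "F a x 1 y = - L a (br x y)" using LF by simp
    ultimately show ?thesis by simp
  qed
  have F3e: "F3 a b x y = F3 (a * b) 1 x y" for a b x y
  proof -
    have "F a x b y = F2 (a*b) x y + (F3 a b x y - F3 (a * b) 1 x y)" using decomp F1z by simp
    moreover have "F a x b y = F2 (a*b) x y" using LF F2l by simp
    ultimately show ?thesis by simp
  qed
  have F3add: "\<forall>u v. F3 (u + v) 1 x y = F3 u 1 x y + F3 v 1 x y" for x y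
    using f3(1) unfolding quadrilin_map_def linear_iff by simp
  have part3: "(\<Sum>(a, b)\<leftarrow>ps. a * b) = 0 \<longrightarrow> (\<Sum>(a, b)\<leftarrow>ps. F3 a b x y) = 0"
    for ps :: "('a \<times> 'a) list" and x y
  proof
    assume s: "(\<Sum>(a, b)\<leftarrow>ps. a * b) = 0"
    have "(\<Sum>(a, b)\<leftarrow>ps. F3 a b x y) = (\<Sum>(a, b)\<leftarrow>ps. F3 (a * b) 1 x y)"
      using F3e by simp
    also have "\<dots> = F3 (\<Sum>(a, b)\<leftarrow>ps. a * b) 1 x y"
      using additive_sum_list[OF F3add[of x y], of "\<lambda>a b. a * b" ps] by simp
    also have "\<dots> = 0" using s additive_zero[OF F3add[of x y]] by simp
    finally show "(\<Sum>(a, b)\<leftarrow>ps. F3 a b x y) = 0" .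
  qed
  show "(\<forall>a b x y. F1 a b x y = 0) \<and>
           (\<forall>(ps :: ('a \<times> 'a) list) x y.
              (\<Sum>(a, b)\<leftarrow>ps. a * b) = 0 \<longrightarrow> (\<Sum>(a, b)\<leftarrow>ps. F3 a b x y) = 0) \<and>
           (\<exists>l :: 'a \<Rightarrow> 'l \<Rightarrow> 'z. bilin_map sA sL sZ l \<and>
              (\<forall>a x y. F2 a x y = - l a (br x y)))"
    using F1z part3 F2l Lb by blast
next
  assume H: "(\<forall>a b x y. F1 a b x y = 0) \<and>
           (\<forall>(ps :: ('a \<times> 'a) list) x y.
              (\<Sum>(a, b)\<leftarrow>ps. a * b) = 0 \<longrightarrow> (\<Sum>(a, b)\<leftarrow>ps. F3 a b x y) = 0) \<and>
           (\<exists>l :: 'a \<Rightarrow> 'l \<Rightarrow> 'z. bilin_map sA sL sZ l \<and>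
              (\<forall>a x y. F2 a x y = - l a (br x y)))"
  then obtain l where lb: "bilin_map sA sL sZ l" and l2: "\<forall>a x y. F2 a x y = - l a (br x y)"
    by blast
  have F3neg: "F3 (- u) 1 x y = - F3 u 1 x y" for u x y
  proof -
    have "Vector_Spaces.linear sA sZ (\<lambda>a. F3 a 1 x y)"
      using f3(1) unfolding quadrilin_map_def by blast
    then have "\<forall>u v. F3 (u + v) 1 x y = F3 u 1 x y + F3 v 1 x y" unfolding linear_iff by blast
    then have "F3 (- u + u) 1 x y = F3 (- u) 1 x y + F3 u 1 x y" by blast
    moreover have "F3 0 1 x y = 0"
      using additive_zero[of "\<lambda>a. F3 a 1 x y"] \<open>\<forall>u v. F3 (u + v) 1 x y = _\<close> by blast
    ultimately show ?thesis by (simp add: eq_neg_iff_add_eq_0)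
  qed
  have F3e: "F3 a b x y - F3 (a * b) 1 x y = 0" for a b x y
  proof -
    have "(\<Sum>(a, b)\<leftarrow>[(a, b), (- (a * b), 1)]. a * b) = 0" by simp
    then have "(\<Sum>(a, b)\<leftarrow>[(a, b), (- (a * b), 1)]. F3 a b x y) = 0" using H by blast
    then show ?thesis using F3neg by simp
  qed
  show "g_2coboundary sA sL sZ br F"
    unfolding g_2coboundary_def
    using lb l2 decomp H F3e by (intro exI[of _ l]) simp
qed

end
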